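(* Let $G$ be a group and $A_0\subseteq\operatorname{Aut}(G)$ a subgroup such that $G$ is an $\mathcal{L}(A_0)$-equational domain. Let $I$ be a set and $H=\prod_{i\in I}G$ the direct power of $G$, whose elements are tuples $(g_i\mid i\in I)$. Let $\mathcal{P}$ be a set of permutations of $I$ that is transitive on $I$ (for all $i,j\in I$ there is $\pi\in\mathcal{P}$ with $\pi(i)=j$). For $\phi\in A_0$ and $\pi\in\mathcal{P}$ define automorphisms of $H$ by $f_\phi((g_i\mid i\in I))=(\phi(g_i)\mid i\in I)$ and $\sigma_\pi((g_i\mid i\in I))=(g_{\pi(i)}\mid i\in I)$, and let $A\subseteq\operatorname{Aut}(H)$ be the group generated by $\{f_\phi,\sigma_\pi\mid\phi\in A_0,\pi\in\mathcal{P}\}$. Then $H$ is an $\mathcal{L}(A)$-equational domain.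
   Context: For a group $K$ and a subgroup $B\subseteq\operatorname{Aut}(K)$, $\mathcal{L}(B)=\{\cdot,{}^{-1},1\}\cup\{\psi\mid\psi\in B\}$ is the group language with a unary function symbol for each $\psi\in B$, interpreted as $\psi$. $\mathcal{L}(B)$-equations are $t(X)=1$ with $t$ an $\mathcal{L}(B)$-term (equivalently a product $\psi_1(x_{i_1}^{\varepsilon_1})\cdots\psi_k(x_{i_k}^{\varepsilon_k})$, $\psi_j\in B$, $\varepsilon_j=\pm1$); systems are arbitrary sets of equations and $V_K(S)$ is the solution set in $K^n$. A subset of $K^n$ is $\mathcal{L}(B)$-algebraic if it equals $V_K(S)$ for some $\mathcal{L}(B)$-system $S$ in $n$ variables. $K$ is an $\mathcal{L}(B)$-equational domain if for every $n$ the union of any two $\mathcal{L}(B)$-algebraic subsets of $K^n$ is $\mathcal{L}(B)$-algebraic. *)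

theory Defs
  imports "HOL-Algebra.Algebra"
begin

text \<open>An L(B)-term in the variables x_0,...,x_{n-1} is represented as a list of
  triples (psi, j, e), standing for the product psi_1(x_{j_1}^{e_1}) ... psi_k(x_{j_k}^{e_k}),
  where e = True means exponent +1 and e = False means exponent -1.
  The empty list is the empty product (the constant 1).\<close>

fun lterm_eval :: "('a, 'c) monoid_scheme \<Rightarrow> (('a \<Rightarrow> 'a) \<times> nat \<times> bool) list \<Rightarrow> 'a list \<Rightarrow> 'a"
  where
    "lterm_eval K [] xs = \<one>\<^bsub>K\<^esub>"
  | "lterm_eval K ((psi, j, e) # t) xs =
       psi (if e then xs ! j else inv\<^bsub>K\<^esub> (xs ! j)) \<otimes>\<^bsub>K\<^esub> lterm_eval K t xs"

definition is_LB_term :: "('a \<Rightarrow> 'a) set \<Rightarrow> nat \<Rightarrow> (('a \<Rightarrow> 'a) \<times> nat \<times> bool) list \<Rightarrow> bool"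
  where "is_LB_term B n t \<longleftrightarrow> (\<forall>(psi, j, e) \<in> set t. psi \<in> B \<and> j < n)"

definition kpoints :: "('a, 'c) monoid_scheme \<Rightarrow> nat \<Rightarrow> 'a list set"
  where "kpoints K n = {xs. length xs = n \<and> set xs \<subseteq> carrier K}"

definition LB_solution_set ::
  "('a, 'c) monoid_scheme \<Rightarrow> nat \<Rightarrow> (('a \<Rightarrow> 'a) \<times> nat \<times> bool) list set \<Rightarrow> 'a list set"
  where "LB_solution_set K n S = {xs \<in> kpoints K n. \<forall>t \<in> S. lterm_eval K t xs = \<one>\<^bsub>K\<^esub>}"

definition LB_algebraic :: "('a, 'c) monoid_scheme \<Rightarrow> ('a \<Rightarrow> 'a) set \<Rightarrow> nat \<Rightarrow> 'a list set \<Rightarrow> bool"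
  where "LB_algebraic K B n Y \<longleftrightarrow>
           (\<exists>S. (\<forall>t \<in> S. is_LB_term B n t) \<and> Y = LB_solution_set K n S)"

definition LB_equational_domain :: "('a, 'c) monoid_scheme \<Rightarrow> ('a \<Rightarrow> 'a) set \<Rightarrow> bool"
  where "LB_equational_domain K B \<longleftrightarrow>
           (\<forall>n Y1 Y2. LB_algebraic K B n Y1 \<longrightarrow> LB_algebraic K B n Y2 \<longrightarrow>
                      LB_algebraic K B n (Y1 \<union> Y2))"

definition direct_power :: "'i set \<Rightarrow> ('a, 'c) monoid_scheme \<Rightarrow> ('i \<Rightarrow> 'a) monoid"
  where "direct_power I G = product_group I (\<lambda>_. G)"

definition coord_aut :: "'i set \<Rightarrow> ('a, 'c) monoid_scheme \<Rightarrow> ('a \<Rightarrow> 'a) \<Rightarrow> ('i \<Rightarrow> 'a) \<Rightarrow> ('i \<Rightarrow> 'a)"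
  where "coord_aut I G phi = (\<lambda>g \<in> carrier (direct_power I G). \<lambda>i \<in> I. phi (g i))"

definition perm_aut :: "'i set \<Rightarrow> ('a, 'c) monoid_scheme \<Rightarrow> ('i \<Rightarrow> 'i) \<Rightarrow> ('i \<Rightarrow> 'a) \<Rightarrow> ('i \<Rightarrow> 'a)"
  where "perm_aut I G p = (\<lambda>g \<in> carrier (direct_power I G). \<lambda>i \<in> I. g (p i))"

end

theory Submission
  imports Defs
begin


lemma auto_hom_props:
  assumes "group K" "psi \<in> auto K"
  shows "psi \<in> carrier K \<rightarrow> carrier K"
    "\<And>x y. x \<in> carrier K \<Longrightarrow> y \<in> carrier K \<Longrightarrow> psi (x \<otimes>\<^bsub>K\<^esub> y) = psi x \<otimes>\<^bsub>K\<^esub> psi y"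
    "\<And>x. x \<in> carrier K \<Longrightarrow> psi (inv\<^bsub>K\<^esub> x) = inv\<^bsub>K\<^esub> (psi x)"
    "psi \<one>\<^bsub>K\<^esub> = \<one>\<^bsub>K\<^esub>"
proof -
  have h: "psi \<in> hom K K" using assms(2) by (simp add: auto_def)
  have gh: "group_hom K K psi" using assms(1) h by (simp add: group_hom_def group_hom_axioms_def)
  show "psi \<in> carrier K \<rightarrow> carrier K" using h by (simp add: hom_def)
  show "\<And>x y. x \<in> carrier K \<Longrightarrow> y \<in> carrier K \<Longrightarrow> psi (x \<otimes>\<^bsub>K\<^esub> y) = psi x \<otimes>\<^bsub>K\<^esub> psi y"
    using h by (simp add: hom_def)
  show "\<And>x. x \<in> carrier K \<Longrightarrow> psi (inv\<^bsub>K\<^esub> x) = inv\<^bsub>K\<^esub> (psi x)"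
    by (rule group_hom.hom_inv[OF gh])
  show "psi \<one>\<^bsub>K\<^esub> = \<one>\<^bsub>K\<^esub>" using gh group_hom.hom_one by blast
qed

lemma auto_in_carrier: "group K \<Longrightarrow> psi \<in> auto K \<Longrightarrow> x \<in> carrier K \<Longrightarrow> psi x \<in> carrier K"
  using auto_hom_props(1) by blast

lemma kpoints_nth: "xs \<in> kpoints K n \<Longrightarrow> j < n \<Longrightarrow> xs ! j \<in> carrier K"
  unfolding kpoints_def by auto

lemma entry_carrier:
  assumes "group K" "psi \<in> auto K" "xs \<in> kpoints K n" "j < n"
  shows "psi (if e then xs ! j else inv\<^bsub>K\<^esub> (xs ! j)) \<in> carrier K"
proof -
  have x: "xs ! j \<in> carrier K" using kpoints_nth[OF assms(3,4)] .
  have "(if e then xs ! j else inv\<^bsub>K\<^esub> (xs ! j)) \<in> carrier K"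
    using x assms(1) group.inv_closed by (cases e) auto
  then show ?thesis using auto_in_carrier[OF assms(1,2)] by blast
qed

lemma eval_carrier:
  assumes "group K" "B \<subseteq> auto K" "is_LB_term B n t" "xs \<in> kpoints K n"
  shows "lterm_eval K t xs \<in> carrier K"
  using assms(3)
proof (induction t)
  case Nil
  then show ?case using assms(1) by (simp add: group.is_monoid monoid.one_closed)
next
  case (Cons a t)
  obtain psi j e where a: "a = (psi, j, e)" by (cases a) auto
  have "psi \<in> auto K" "j < n" "is_LB_term B n t" using Cons.prems assms(2) a by (auto simp: is_LB_term_def)
  then show ?case using Cons.IH entry_carrier[OF assms(1) _ assms(4)] a assms(1)
    by (simp add: group.is_monoid monoid.m_closed)
qed

lemma is_LB_term_append: "is_LB_term B n (a @ b) = (is_LB_term B n a \<and> is_LB_term B n b)"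
  unfolding is_LB_term_def by (simp only: set_append ball_Un)

lemma eval_append:
  assumes "group K" "B \<subseteq> auto K" "is_LB_term B n a" "is_LB_term B n b" "xs \<in> kpoints K n"
  shows "lterm_eval K (a @ b) xs = lterm_eval K a xs \<otimes>\<^bsub>K\<^esub> lterm_eval K b xs"
  using assms(3)
proof (induction a)
  case Nil
  then show ?case using eval_carrier[OF assms(1,2,4,5)] assms(1) by (simp add: group.is_monoid monoid.l_one)
next
  case (Cons c a)
  obtain psi j e where c: "c = (psi, j, e)" by (cases c) auto
  have "psi \<in> auto K" "j < n" "is_LB_term B n a" using Cons.prems assms(2) c by (auto simp: is_LB_term_def)
  then show ?case using Cons.IH entry_carrier[OF assms(1) _ assms(5)] c assms(1)
      eval_carrier[OF assms(1,2) _ assms(5)] assms(4)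
    by (simp add: group.is_monoid monoid.m_assoc)
qed

definition ap :: "'a set \<Rightarrow> ('a \<Rightarrow> 'a) \<Rightarrow> (('a \<Rightarrow> 'a) \<times> nat \<times> bool) list \<Rightarrow> (('a \<Rightarrow> 'a) \<times> nat \<times> bool) list"
  where "ap C \<alpha> t = map (\<lambda>(psi, j, e). (compose C \<alpha> psi, j, e)) t"

definition apinv :: "'a set \<Rightarrow> ('a \<Rightarrow> 'a) \<Rightarrow> (('a \<Rightarrow> 'a) \<times> nat \<times> bool) list \<Rightarrow> (('a \<Rightarrow> 'a) \<times> nat \<times> bool) list"
  where "apinv C \<alpha> t = rev (map (\<lambda>(psi, j, e). (compose C \<alpha> psi, j, \<not> e)) t)"

locale autcl =
  fixes K :: "('a, 'c) monoid_scheme" and B :: "('a \<Rightarrow> 'a) set"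
  assumes grp: "group K" and sub: "B \<subseteq> auto K"
    and cl: "\<And>a b. a \<in> B \<Longrightarrow> b \<in> B \<Longrightarrow> compose (carrier K) a b \<in> B"
begin

lemma ap_term: "\<alpha> \<in> B \<Longrightarrow> is_LB_term B n t \<Longrightarrow> is_LB_term B n (ap (carrier K) \<alpha> t)"
  unfolding is_LB_term_def ap_def using cl by auto

lemma apinv_term: "\<alpha> \<in> B \<Longrightarrow> is_LB_term B n t \<Longrightarrow> is_LB_term B n (apinv (carrier K) \<alpha> t)"
  unfolding is_LB_term_def apinv_def using cl by auto

lemma ap_eval:
  assumes "\<alpha> \<in> B" "is_LB_term B n t" "xs \<in> kpoints K n"
  shows "lterm_eval K (ap (carrier K) \<alpha> t) xs = \<alpha> (lterm_eval K t xs)"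
  using assms(2)
proof (induction t)
  case Nil
  have "\<alpha> \<one>\<^bsub>K\<^esub> = \<one>\<^bsub>K\<^esub>" using auto_hom_props(4)[OF grp, of \<alpha>] assms(1) sub by auto
  then show ?case by (simp add: ap_def)
next
  case (Cons c t)
  obtain psi j e where c: "c = (psi, j, e)" by (cases c) auto
  have ps: "psi \<in> auto K" "j < n" "is_LB_term B n t" using Cons.prems sub c by (auto simp: is_LB_term_def)
  have aa: "\<alpha> \<in> auto K" using assms(1) sub by auto
  have x: "(if e then xs ! j else inv\<^bsub>K\<^esub> (xs ! j)) \<in> carrier K"
    using kpoints_nth[OF assms(3) ps(2)] grp by (simp add: group.inv_closed)
  have "lterm_eval K (ap (carrier K) \<alpha> (c # t)) xs
      = \<alpha> (psi (if e then xs ! j else inv\<^bsub>K\<^esub> (xs ! j))) \<otimes>\<^bsub>K\<^esub> \<alpha> (lterm_eval K t xs)"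
    using Cons.IH ps x by (simp add: ap_def c compose_def)
  also have "\<dots> = \<alpha> (lterm_eval K (c # t) xs)"
    using auto_hom_props(2)[OF grp aa] auto_in_carrier[OF grp ps(1) x] eval_carrier[OF grp sub ps(3) assms(3)]
    by (simp add: c)
  finally show ?case .
qed

lemma apinv_eval:
  assumes "\<alpha> \<in> B" "is_LB_term B n t" "xs \<in> kpoints K n"
  shows "lterm_eval K (apinv (carrier K) \<alpha> t) xs = \<alpha> (inv\<^bsub>K\<^esub> (lterm_eval K t xs))"
  using assms(2)
proof (induction t)
  case Nil
  have "\<alpha> \<one>\<^bsub>K\<^esub> = \<one>\<^bsub>K\<^esub>" using auto_hom_props(4)[OF grp, of \<alpha>] assms(1) sub by auto
  then show ?case using grp by (simp add: apinv_def group.is_monoid monoid.inv_one)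
next
  case (Cons c t)
  obtain psi j e where c: "c = (psi, j, e)" by (cases c) auto
  have ps: "psi \<in> auto K" "j < n" "is_LB_term B n t" "psi \<in> B" using Cons.prems sub c by (auto simp: is_LB_term_def)
  have aa: "\<alpha> \<in> auto K" using assms(1) sub by auto
  have xj: "xs ! j \<in> carrier K" using kpoints_nth[OF assms(3) ps(2)] .
  have x: "(if e then xs ! j else inv\<^bsub>K\<^esub> (xs ! j)) \<in> carrier K"
    using xj grp by (simp add: group.inv_closed)
  have x': "(if \<not> e then xs ! j else inv\<^bsub>K\<^esub> (xs ! j)) \<in> carrier K"
    using xj grp by (simp add: group.inv_closed)
  have xinv: "(if \<not> e then xs ! j else inv\<^bsub>K\<^esub> (xs ! j)) = inv\<^bsub>K\<^esub> (if e then xs ! j else inv\<^bsub>K\<^esub> (xs ! j))"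
    using xj grp by (simp add: group.inv_inv)
  have T: "lterm_eval K t xs \<in> carrier K" using eval_carrier[OF grp sub ps(3) assms(3)] .
  have pc: "psi (if e then xs ! j else inv\<^bsub>K\<^esub> (xs ! j)) \<in> carrier K" using auto_in_carrier[OF grp ps(1) x] .
  have t1: "is_LB_term B n (apinv (carrier K) \<alpha> t)" using apinv_term[OF assms(1) ps(3)] .
  have t2: "is_LB_term B n [(compose (carrier K) \<alpha> psi, j, \<not> e)]"
    using cl[OF assms(1) ps(4)] ps(2) by (simp add: is_LB_term_def)
  have "lterm_eval K (apinv (carrier K) \<alpha> (c # t)) xs
      = lterm_eval K (apinv (carrier K) \<alpha> t @ [(compose (carrier K) \<alpha> psi, j, \<not> e)]) xs"
    by (simp add: apinv_def c)
  also have "\<dots> = \<alpha> (inv\<^bsub>K\<^esub> (lterm_eval K t xs)) \<otimes>\<^bsub>K\<^esub> (\<alpha> (psi (inv\<^bsub>K\<^esub> (if e then xs ! j else inv\<^bsub>K\<^esub> (xs ! j)))) \<otimes>\<^bsub>K\<^esub> \<one>\<^bsub>K\<^esub>)"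
    using eval_append[OF grp sub t1 t2 assms(3)] Cons.IH ps x' xinv by (simp add: compose_def)
  also have "\<dots> = \<alpha> (inv\<^bsub>K\<^esub> (lterm_eval K t xs) \<otimes>\<^bsub>K\<^esub> inv\<^bsub>K\<^esub> (psi (if e then xs ! j else inv\<^bsub>K\<^esub> (xs ! j))))"
    using auto_hom_props[OF grp aa] auto_hom_props[OF grp ps(1)] x T pc grp
    by (simp add: group.inv_closed group.is_monoid monoid.r_one auto_in_carrier[OF grp aa])
  also have "\<dots> = \<alpha> (inv\<^bsub>K\<^esub> (lterm_eval K (c # t) xs))"
    using T pc grp by (simp add: c group.inv_mult_group)
  finally show ?case .
qed

definition subst2 :: "(('a \<Rightarrow> 'a) \<times> nat \<times> bool) list \<Rightarrow> (('a \<Rightarrow> 'a) \<times> nat \<times> bool) list \<Rightarrow>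
   (('a \<Rightarrow> 'a) \<times> nat \<times> bool) list \<Rightarrow> (('a \<Rightarrow> 'a) \<times> nat \<times> bool) list"
  where "subst2 t s w = concat (map (\<lambda>(\<alpha>, j, e). if j = 0 then (if e then ap (carrier K) \<alpha> t else apinv (carrier K) \<alpha> t)
      else (if e then ap (carrier K) \<alpha> s else apinv (carrier K) \<alpha> s)) w)"

lemma subst2_props:
  assumes "is_LB_term B 2 w" "is_LB_term B n t" "is_LB_term B n s" "xs \<in> kpoints K n"
  shows "is_LB_term B n (subst2 t s w) \<and>
    lterm_eval K (subst2 t s w) xs = lterm_eval K w [lterm_eval K t xs, lterm_eval K s xs]"
  using assms(1)
proof (induction w)
  case Nil
  then show ?case by (simp add: subst2_def is_LB_term_def)
next
  case (Cons c w)
  obtain \<alpha> j e where c: "c = (\<alpha>, j, e)" by (cases c) auto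
  have ps: "\<alpha> \<in> B" "j < 2" "is_LB_term B 2 w" using Cons.prems c by (auto simp: is_LB_term_def)
  define blk where "blk = (if j = 0 then (if e then ap (carrier K) \<alpha> t else apinv (carrier K) \<alpha> t)
      else (if e then ap (carrier K) \<alpha> s else apinv (carrier K) \<alpha> s))"
  have eq: "subst2 t s (c # w) = blk @ subst2 t s w" by (simp add: subst2_def blk_def c)
  have bt: "is_LB_term B n blk" using ap_term apinv_term ps(1) assms(2,3) by (simp add: blk_def)
  have be: "lterm_eval K blk xs = \<alpha> (if e then [lterm_eval K t xs, lterm_eval K s xs] ! j
        else inv\<^bsub>K\<^esub> ([lterm_eval K t xs, lterm_eval K s xs] ! j))"
    using ps ap_eval[OF ps(1) _ assms(4)] apinv_eval[OF ps(1) _ assms(4)] assms(2,3)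
    by (auto simp: blk_def less_2_cases_iff)
  have ih: "is_LB_term B n (subst2 t s w)"
    "lterm_eval K (subst2 t s w) xs = lterm_eval K w [lterm_eval K t xs, lterm_eval K s xs]"
    using Cons.IH[OF ps(3)] by auto
  have 1: "is_LB_term B n (subst2 t s (c # w))" unfolding eq is_LB_term_append using bt ih by simp
  have "lterm_eval K (subst2 t s (c # w)) xs = lterm_eval K blk xs \<otimes>\<^bsub>K\<^esub> lterm_eval K (subst2 t s w) xs"
    unfolding eq by (rule eval_append[OF grp sub bt ih(1) assms(4)])
  also have "\<dots> = lterm_eval K (c # w) [lterm_eval K t xs, lterm_eval K s xs]"
    unfolding be ih(2) c by (simp only: lterm_eval.simps)
  finally show ?case using 1 by simp
qed

lemma ED_from_M:
  assumes "LB_algebraic K B 2 {xs \<in> kpoints K 2. xs ! 0 = \<one>\<^bsub>K\<^esub> \<or> xs ! 1 = \<one>\<^bsub>K\<^esub>}"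
  shows "LB_equational_domain K B"
  unfolding LB_equational_domain_def
proof (intro allI impI)
  fix n Y1 Y2
  assume "LB_algebraic K B n Y1" "LB_algebraic K B n Y2"
  then obtain S1 S2 where S1: "\<forall>t\<in>S1. is_LB_term B n t" "Y1 = LB_solution_set K n S1"
    and S2: "\<forall>t\<in>S2. is_LB_term B n t" "Y2 = LB_solution_set K n S2"
    unfolding LB_algebraic_def by blast
  obtain S0 where S0: "\<forall>t\<in>S0. is_LB_term B 2 t"
    "{xs \<in> kpoints K 2. xs ! 0 = \<one>\<^bsub>K\<^esub> \<or> xs ! 1 = \<one>\<^bsub>K\<^esub>} = LB_solution_set K 2 S0"
    using assms unfolding LB_algebraic_def by blast
  define S where "S = {subst2 t s w | t s w. t \<in> S1 \<and> s \<in> S2 \<and> w \<in> S0}"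
  have "\<forall>u\<in>S. is_LB_term B n u"
  proof
    fix u assume "u \<in> S"
    then obtain t s w where u: "u = subst2 t s w" "t \<in> S1" "s \<in> S2" "w \<in> S0" unfolding S_def by blast
    have pt: "replicate n \<one>\<^bsub>K\<^esub> \<in> kpoints K n" using grp
      by (auto simp: kpoints_def group.is_monoid monoid.one_closed)
    show "is_LB_term B n u" using subst2_props[OF _ _ _ pt, of w t s] u S0(1) S1(1) S2(1) by blast
  qed
  moreover have "xs \<in> Y1 \<union> Y2 \<longleftrightarrow> xs \<in> LB_solution_set K n S" for xs
    proof (cases "xs \<in> kpoints K n")
      case False
      then show ?thesis using S1 S2 by (simp add: LB_solution_set_def)
    next
      case True
      have key: "(\<forall>w\<in>S0. lterm_eval K (subst2 t s w) xs = \<one>\<^bsub>K\<^esub>) \<longleftrightarrow>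
          (lterm_eval K t xs = \<one>\<^bsub>K\<^esub> \<or> lterm_eval K s xs = \<one>\<^bsub>K\<^esub>)" if "t \<in> S1" "s \<in> S2" for t s
      proof -
        have tt: "is_LB_term B n t" "is_LB_term B n s" using that S1 S2 by auto
        have kp: "[lterm_eval K t xs, lterm_eval K s xs] \<in> kpoints K 2"
          using eval_carrier[OF grp sub _ True] tt by (simp add: kpoints_def)
        have "(\<forall>w\<in>S0. lterm_eval K (subst2 t s w) xs = \<one>\<^bsub>K\<^esub>) \<longleftrightarrow>
            [lterm_eval K t xs, lterm_eval K s xs] \<in> LB_solution_set K 2 S0"
          using subst2_props[OF _ tt True] S0(1) kp by (auto simp: LB_solution_set_def)
        also have "\<dots> \<longleftrightarrow> (lterm_eval K t xs = \<one>\<^bsub>K\<^esub> \<or> lterm_eval K s xs = \<one>\<^bsub>K\<^esub>)"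
          using S0(2)[symmetric] kp by auto
        finally show ?thesis .
      qed
      have "xs \<in> LB_solution_set K n S \<longleftrightarrow>
          (\<forall>t\<in>S1. \<forall>s\<in>S2. \<forall>w\<in>S0. lterm_eval K (subst2 t s w) xs = \<one>\<^bsub>K\<^esub>)"
        using True by (auto simp: LB_solution_set_def S_def)
      also have "\<dots> \<longleftrightarrow>
          (\<forall>t\<in>S1. \<forall>s\<in>S2. lterm_eval K t xs = \<one>\<^bsub>K\<^esub> \<or> lterm_eval K s xs = \<one>\<^bsub>K\<^esub>)"
        using key by simp
      also have "\<dots> \<longleftrightarrow> xs \<in> Y1 \<union> Y2"
        using True S1(2) S2(2) by (auto simp: LB_solution_set_def)
      finally show ?thesis by simp
    qed
  ultimately show "LB_algebraic K B n (Y1 \<union> Y2)" unfolding LB_algebraic_def by (intro exI[of _ S]) auto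
qed

end



lemma restrict_eq_iff: "((\<lambda>i\<in>I. f i) = (\<lambda>i\<in>I. g i)) \<longleftrightarrow> (\<forall>i\<in>I. f i = g i)"
  by (metis restrict_apply' restrict_ext)

context
  fixes G :: "('a, 'c) monoid_scheme" and I :: "'i set"
  assumes grpG: "group G"
begin

lemma grpH: "group (direct_power I G)"
  using grpG by (simp add: direct_power_def)

lemma carrH: "carrier (direct_power I G) = (\<Pi>\<^sub>E i\<in>I. carrier G)"
  by (simp add: direct_power_def)

lemma oneH: "\<one>\<^bsub>direct_power I G\<^esub> = (\<lambda>i\<in>I. \<one>\<^bsub>G\<^esub>)"
  by (simp add: direct_power_def)

lemma multH: "x \<otimes>\<^bsub>direct_power I G\<^esub> y = (\<lambda>i\<in>I. x i \<otimes>\<^bsub>G\<^esub> y i)"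
  by (simp add: direct_power_def)

lemma invH: "u \<in> carrier (direct_power I G) \<Longrightarrow> inv\<^bsub>direct_power I G\<^esub> u = (\<lambda>i\<in>I. inv\<^bsub>G\<^esub> (u i))"
  using grpG by (simp add: direct_power_def)

lemma pwH: "u \<in> carrier (direct_power I G) \<Longrightarrow> i \<in> I \<Longrightarrow>
   (if e then u else inv\<^bsub>direct_power I G\<^esub> u) i = (if e then u i else inv\<^bsub>G\<^esub> (u i))"
  using invH by auto

lemma pwH_carr: "u \<in> carrier (direct_power I G) \<Longrightarrow>
   (if e then u else inv\<^bsub>direct_power I G\<^esub> u) \<in> carrier (direct_power I G)"
  using grpH group.inv_closed by (cases e) auto

lemma coord_apply: "x \<in> carrier (direct_power I G) \<Longrightarrow> coord_aut I G phi x = (\<lambda>i\<in>I. phi (x i))"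
  by (simp add: coord_aut_def)

lemma perm_apply: "x \<in> carrier (direct_power I G) \<Longrightarrow> perm_aut I G p x = (\<lambda>i\<in>I. x (p i))"
  by (simp add: perm_aut_def)

lemma perm_carr: "bij_betw p I I \<Longrightarrow> x \<in> carrier (direct_power I G) \<Longrightarrow>
    perm_aut I G p x \<in> carrier (direct_power I G)"
proof -
  assume a: "bij_betw p I I" "x \<in> carrier (direct_power I G)"
  have "perm_aut I G p x = (\<lambda>i\<in>I. x (p i))" by (rule perm_apply[OF a(2)])
  then show ?thesis using a by (auto simp: carrH bij_betw_def PiE_iff)
qed

lemma coord_aut_auto:
  assumes "phi \<in> auto G"
  shows "coord_aut I G phi \<in> auto (direct_power I G)"
proof -
  have bp: "bij_betw phi (carrier G) (carrier G)" using assms by (simp add: auto_def Bij_def)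
  have hp: "phi \<in> hom G G" using assms by (simp add: auto_def)
  have into: "\<And>x. x \<in> carrier G \<Longrightarrow> phi x \<in> carrier G" using hp by (auto simp: hom_def)
  define q where "q = inv_into (carrier G) phi"
  have qi: "\<And>x. x \<in> carrier G \<Longrightarrow> q x \<in> carrier G"
    unfolding q_def using bp by (metis bij_betw_def inv_into_into)
  have q1: "\<And>x. x \<in> carrier G \<Longrightarrow> q (phi x) = x"
    unfolding q_def using bp by (simp add: bij_betw_inv_into_left)
  have q2: "\<And>x. x \<in> carrier G \<Longrightarrow> phi (q x) = x"
    unfolding q_def using bp by (simp add: bij_betw_inv_into_right)
  have c1: "coord_aut I G phi \<in> carrier (direct_power I G) \<rightarrow> carrier (direct_power I G)"
    using into by (auto simp: coord_apply carrH PiE_iff)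
  have hom: "coord_aut I G phi \<in> hom (direct_power I G) (direct_power I G)"
    unfolding hom_def
  proof (intro CollectI conjI ballI c1)
    fix x y assume xy: "x \<in> carrier (direct_power I G)" "y \<in> carrier (direct_power I G)"
    have m: "x \<otimes>\<^bsub>direct_power I G\<^esub> y \<in> carrier (direct_power I G)"
      using xy grpH by (simp add: group.is_monoid monoid.m_closed)
    show "coord_aut I G phi (x \<otimes>\<^bsub>direct_power I G\<^esub> y) =
        coord_aut I G phi x \<otimes>\<^bsub>direct_power I G\<^esub> coord_aut I G phi y"
      unfolding coord_apply[OF xy(1)] coord_apply[OF xy(2)] coord_apply[OF m[unfolded multH]] multH
      using xy hp by (auto simp: carrH PiE_iff hom_def intro!: restrict_ext)
  qed
  have bij: "bij_betw (coord_aut I G phi) (carrier (direct_power I G)) (carrier (direct_power I G))"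
  proof (rule bij_betw_byWitness[where f' = "coord_aut I G q"])
    show "\<forall>a\<in>carrier (direct_power I G). coord_aut I G q (coord_aut I G phi a) = a"
      using c1 q1 by (auto simp: coord_apply carrH PiE_iff Pi_iff intro!: extensionalityI[where A=I])
    have c2: "coord_aut I G q \<in> carrier (direct_power I G) \<rightarrow> carrier (direct_power I G)"
      using qi by (auto simp: coord_apply carrH PiE_iff)
    show "\<forall>a\<in>carrier (direct_power I G). coord_aut I G phi (coord_aut I G q a) = a"
      using c2 q2 by (auto simp: coord_apply carrH PiE_iff Pi_iff intro!: extensionalityI[where A=I])
    show "coord_aut I G phi ` carrier (direct_power I G) \<subseteq> carrier (direct_power I G)" using c1 by auto
    show "coord_aut I G q ` carrier (direct_power I G) \<subseteq> carrier (direct_power I G)" using c2 by auto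
  qed
  have ext: "coord_aut I G phi \<in> extensional (carrier (direct_power I G))"
    by (simp add: coord_aut_def)
  show ?thesis using hom bij ext by (simp add: auto_def Bij_def)
qed

lemma perm_aut_auto:
  assumes "bij_betw p I I"
  shows "perm_aut I G p \<in> auto (direct_power I G)"
proof -
  define q where "q = inv_into I p"
  have qi: "\<And>x. x \<in> I \<Longrightarrow> q x \<in> I"
    unfolding q_def using assms by (metis bij_betw_def inv_into_into)
  have pi: "\<And>x. x \<in> I \<Longrightarrow> p x \<in> I"
    using assms by (auto simp: bij_betw_def)
  have q1: "\<And>x. x \<in> I \<Longrightarrow> q (p x) = x"
    unfolding q_def using assms by (simp add: bij_betw_inv_into_left)
  have q2: "\<And>x. x \<in> I \<Longrightarrow> p (q x) = x"
    unfolding q_def using assms by (simp add: bij_betw_inv_into_right)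
  have bq: "bij_betw q I I" unfolding q_def using assms by (simp add: bij_betw_inv_into)
  have c1: "perm_aut I G p \<in> carrier (direct_power I G) \<rightarrow> carrier (direct_power I G)"
    using perm_carr[OF assms] by auto
  have hom: "perm_aut I G p \<in> hom (direct_power I G) (direct_power I G)"
    unfolding hom_def
  proof (intro CollectI conjI ballI c1)
    fix x y assume xy: "x \<in> carrier (direct_power I G)" "y \<in> carrier (direct_power I G)"
    have m: "x \<otimes>\<^bsub>direct_power I G\<^esub> y \<in> carrier (direct_power I G)"
      using xy grpH by (simp add: group.is_monoid monoid.m_closed)
    show "perm_aut I G p (x \<otimes>\<^bsub>direct_power I G\<^esub> y) =
        perm_aut I G p x \<otimes>\<^bsub>direct_power I G\<^esub> perm_aut I G p y"
      unfolding perm_apply[OF xy(1)] perm_apply[OF xy(2)] perm_apply[OF m[unfolded multH]] multH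
      using pi by (auto intro!: restrict_ext)
  qed
  have bij: "bij_betw (perm_aut I G p) (carrier (direct_power I G)) (carrier (direct_power I G))"
  proof (rule bij_betw_byWitness[where f' = "perm_aut I G q"])
    show "\<forall>a\<in>carrier (direct_power I G). perm_aut I G q (perm_aut I G p a) = a"
      using perm_carr[OF assms] q2 qi
      by (auto simp: perm_apply carrH PiE_iff Pi_iff intro!: extensionalityI[where A=I])
    show "\<forall>a\<in>carrier (direct_power I G). perm_aut I G p (perm_aut I G q a) = a"
      using perm_carr[OF bq] q1 pi
      by (auto simp: perm_apply carrH PiE_iff Pi_iff intro!: extensionalityI[where A=I])
    show "perm_aut I G p ` carrier (direct_power I G) \<subseteq> carrier (direct_power I G)" using c1 by auto
    show "perm_aut I G q ` carrier (direct_power I G) \<subseteq> carrier (direct_power I G)"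
      using perm_carr[OF bq] by auto
  qed
  have ext: "perm_aut I G p \<in> extensional (carrier (direct_power I G))"
    by (simp add: perm_aut_def)
  show ?thesis using hom bij ext by (simp add: auto_def Bij_def)
qed

end



definition lift :: "'i set \<Rightarrow> ('a, 'c) monoid_scheme \<Rightarrow> ('i \<Rightarrow> 'i) \<Rightarrow> (('a \<Rightarrow> 'a) \<times> nat \<times> bool) list
    \<Rightarrow> ((('i \<Rightarrow> 'a) \<Rightarrow> ('i \<Rightarrow> 'a)) \<times> nat \<times> bool) list"
  where "lift I G p w = map (\<lambda>(phi, j, e). (if j = 0 then coord_aut I G phi
      else compose (carrier (direct_power I G)) (coord_aut I G phi) (perm_aut I G p), j, e)) w"

lemma lift_eval:
  assumes grpG: "group G" and p: "bij_betw p I I"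
    and u: "u \<in> carrier (direct_power I G)" and v: "v \<in> carrier (direct_power I G)"
    and w: "\<forall>(phi, j, e) \<in> set w. j < 2"
  shows "lterm_eval (direct_power I G) (lift I G p w) [u, v] = (\<lambda>i\<in>I. lterm_eval G w [u i, v (p i)])"
  using w
proof (induction w)
  case Nil
  then show ?case by (simp add: lift_def oneH[OF grpG])
next
  case (Cons c w)
  obtain phi j e where c: "c = (phi, j, e)" by (cases c) auto
  have j: "j < 2" and ws: "\<forall>(phi, j, e) \<in> set w. j < 2" using Cons.prems c by auto
  define F where "F = (if j = 0 then coord_aut I G phi
      else compose (carrier (direct_power I G)) (coord_aut I G phi) (perm_aut I G p))"
  define x where "x = (if e then [u, v] ! j else inv\<^bsub>direct_power I G\<^esub> ([u, v] ! j))"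
  have pi: "\<And>i. i \<in> I \<Longrightarrow> p i \<in> I" using p by (auto simp: bij_betw_def)
  have step: "F x i = phi (if e then [u i, v (p i)] ! j else inv\<^bsub>G\<^esub> ([u i, v (p i)] ! j))" if i: "i \<in> I" for i
  proof (cases "j = 0")
    case True
    have n0: "[u, v] ! 0 = u" by simp
    have xc: "x \<in> carrier (direct_power I G)" unfolding x_def True n0 by (rule pwH_carr[OF grpG u])
    show ?thesis unfolding F_def using True coord_apply[OF grpG xc] i by (simp add: x_def invH[OF grpG u])
  next
    case False
    then have j1: "j = 1" using j by simp
    have n1: "[u, v] ! 1 = v" by simp
    have xc: "x \<in> carrier (direct_power I G)" unfolding x_def j1 n1 by (rule pwH_carr[OF grpG v])
    have pc: "perm_aut I G p x \<in> carrier (direct_power I G)" using perm_carr[OF grpG p xc] .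
    have "F x = coord_aut I G phi (perm_aut I G p x)" unfolding F_def using False xc by (simp add: compose_def)
    also have "\<dots> = (\<lambda>i\<in>I. phi ((\<lambda>i\<in>I. x (p i)) i))"
      unfolding coord_apply[OF grpG pc] unfolding perm_apply[OF grpG xc] by (rule refl)
    finally show ?thesis using i pi[OF i] by (simp add: x_def j1 invH[OF grpG v])
  qed
  have "lterm_eval (direct_power I G) (lift I G p (c # w)) [u, v]
      = F x \<otimes>\<^bsub>direct_power I G\<^esub> lterm_eval (direct_power I G) (lift I G p w) [u, v]"
    by (simp add: lift_def c F_def x_def)
  also have "\<dots> = (\<lambda>i\<in>I. F x i \<otimes>\<^bsub>G\<^esub> (\<lambda>i\<in>I. lterm_eval G w [u i, v (p i)]) i)"
    by (simp only: Cons.IH[OF ws] multH[OF grpG])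
  also have "\<dots> = (\<lambda>i\<in>I. lterm_eval G (c # w) [u i, v (p i)])"
    by (rule restrict_ext) (simp add: step c)
  finally show ?case .
qed

lemma kpoints2: "xs \<in> kpoints K 2 \<Longrightarrow> \<exists>u v. xs = [u, v] \<and> u \<in> carrier K \<and> v \<in> carrier K"
  unfolding kpoints_def
  by (cases xs; cases "tl xs"; auto simp: numeral_2_eq_2)

theorem corollary2:
  fixes G :: "('a, 'c) monoid_scheme" and A0 :: "('a \<Rightarrow> 'a) set"
    and I :: "'i set" and P :: "('i \<Rightarrow> 'i) set"
  assumes "group G"
    and "subgroup A0 (AutoGroup G)"
    and "LB_equational_domain G A0"
    and "\<forall>p \<in> P. bij_betw p I I"
    and "\<forall>i \<in> I. \<forall>j \<in> I. \<exists>p \<in> P. p i = j"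
  shows "LB_equational_domain (direct_power I G)
           (generate (AutoGroup (direct_power I G))
              (coord_aut I G ` A0 \<union> perm_aut I G ` P))"
proof -
  note grpG = assms(1)
  define H where "H = direct_power I G"
  define gens where "gens = coord_aut I G ` A0 \<union> perm_aut I G ` P"
  define Agen where "Agen = generate (AutoGroup H) gens"
  have gH: "group H" unfolding H_def using grpH[OF grpG] .
  have AG: "group (AutoGroup H)" using group.AutoGroup[OF gH] .
  have cAG: "carrier (AutoGroup H) = auto H" by (simp add: AutoGroup_def BijGroup_def)
  have A0a: "A0 \<subseteq> auto G" using subgroup.subset[OF assms(2)] by (simp add: AutoGroup_def BijGroup_def)
  have gsub: "gens \<subseteq> auto H"
    unfolding gens_def H_def using coord_aut_auto[OF grpG] perm_aut_auto[OF grpG] A0a assms(4) by blast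
  have Asub: "Agen \<subseteq> auto H"
    unfolding Agen_def using group.generate_in_carrier[OF AG] gsub cAG by blast
  have cl: "compose (carrier H) a b \<in> Agen" if ab: "a \<in> Agen" "b \<in> Agen" for a b
  proof -
    have "a \<otimes>\<^bsub>AutoGroup H\<^esub> b \<in> Agen" unfolding Agen_def using ab unfolding Agen_def by (rule generate.eng)
    moreover have "a \<otimes>\<^bsub>AutoGroup H\<^esub> b = compose (carrier H) a b"
      using ab Asub by (auto simp: AutoGroup_def BijGroup_def auto_def)
    ultimately show ?thesis by simp
  qed
  interpret A: autcl H Agen
    by (rule autcl.intro[OF gH Asub cl])
  define idG where "idG = (\<lambda>x\<in>carrier G. x)"
  have idA: "idG \<in> A0"
    using subgroup.one_closed[OF assms(2)] by (simp add: idG_def AutoGroup_def BijGroup_def)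
  have single: "LB_algebraic G A0 2 {xs \<in> kpoints G 2. xs ! k = \<one>\<^bsub>G\<^esub>}" if k: "k < 2" for k
  proof -
    have "{xs \<in> kpoints G 2. xs ! k = \<one>\<^bsub>G\<^esub>} = LB_solution_set G 2 {[(idG, k, True)]}"
      using kpoints_nth[of _ G 2 k] k grpG
      by (auto simp: LB_solution_set_def idG_def group.is_monoid monoid.r_one)
    moreover have "is_LB_term A0 2 [(idG, k, True)]" using idA k by (simp add: is_LB_term_def)
    ultimately show ?thesis unfolding LB_algebraic_def by (intro exI[of _ "{[(idG, k, True)]}"]) auto
  qed
  have "LB_algebraic G A0 2 ({xs \<in> kpoints G 2. xs ! 0 = \<one>\<^bsub>G\<^esub>} \<union> {xs \<in> kpoints G 2. xs ! 1 = \<one>\<^bsub>G\<^esub>})"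
    using assms(3) single[of 0] single[of 1] unfolding LB_equational_domain_def by simp
  moreover have "{xs \<in> kpoints G 2. xs ! 0 = \<one>\<^bsub>G\<^esub>} \<union> {xs \<in> kpoints G 2. xs ! 1 = \<one>\<^bsub>G\<^esub>}
      = {xs \<in> kpoints G 2. xs ! 0 = \<one>\<^bsub>G\<^esub> \<or> xs ! 1 = \<one>\<^bsub>G\<^esub>}" by auto
  ultimately obtain S0 where S0: "\<forall>t\<in>S0. is_LB_term A0 2 t"
    "{xs \<in> kpoints G 2. xs ! 0 = \<one>\<^bsub>G\<^esub> \<or> xs ! 1 = \<one>\<^bsub>G\<^esub>} = LB_solution_set G 2 S0"
    unfolding LB_algebraic_def by auto
  define SH where "SH = {lift I G p w | p w. p \<in> P \<and> w \<in> S0}"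
  have SHt: "\<forall>t\<in>SH. is_LB_term Agen 2 t"
  proof
    fix t assume "t \<in> SH"
    then obtain p w where t: "t = lift I G p w" "p \<in> P" "w \<in> S0" unfolding SH_def by blast
    have pA: "perm_aut I G p \<in> Agen" unfolding Agen_def gens_def using t(2) by (blast intro: generate.incl)
    have cA: "coord_aut I G phi \<in> Agen" if "phi \<in> A0" for phi
      unfolding Agen_def gens_def using that by (blast intro: generate.incl)
    have "is_LB_term A0 2 w" using S0(1) t(3) by blast
    then show "is_LB_term Agen 2 t" unfolding t(1) is_LB_term_def lift_def
      using cA cl[OF cA pA] by (auto simp: H_def)
  qed
  have MH: "{xs \<in> kpoints H 2. xs ! 0 = \<one>\<^bsub>H\<^esub> \<or> xs ! 1 = \<one>\<^bsub>H\<^esub>} = LB_solution_set H 2 SH"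
  proof (rule Set.set_eqI)
    fix xs
    show "xs \<in> {xs \<in> kpoints H 2. xs ! 0 = \<one>\<^bsub>H\<^esub> \<or> xs ! 1 = \<one>\<^bsub>H\<^esub>} \<longleftrightarrow> xs \<in> LB_solution_set H 2 SH"
    proof (cases "xs \<in> kpoints H 2")
      case False
      then show ?thesis by (simp add: LB_solution_set_def)
    next
      case True
      then obtain u v where xs: "xs = [u, v]" and u: "u \<in> carrier H" and v: "v \<in> carrier H"
        using kpoints2 by blast
      have uc: "\<And>i. i \<in> I \<Longrightarrow> u i \<in> carrier G" and vc: "\<And>i. i \<in> I \<Longrightarrow> v i \<in> carrier G"
        using u v by (auto simp: H_def carrH[OF grpG] PiE_iff)
      have pI: "\<And>p i. p \<in> P \<Longrightarrow> i \<in> I \<Longrightarrow> p i \<in> I" using assms(4) by (auto simp: bij_betw_def)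
      have w2: "\<forall>(phi, j, e) \<in> set w. j < 2" if "w \<in> S0" for w
        using S0(1) that by (auto simp: is_LB_term_def)
      have "xs \<in> LB_solution_set H 2 SH \<longleftrightarrow>
          (\<forall>p\<in>P. \<forall>w\<in>S0. lterm_eval H (lift I G p w) [u, v] = \<one>\<^bsub>H\<^esub>)"
        using True xs by (auto simp: LB_solution_set_def SH_def)
      also have "\<dots> \<longleftrightarrow> (\<forall>p\<in>P. \<forall>w\<in>S0. \<forall>i\<in>I. lterm_eval G w [u i, v (p i)] = \<one>\<^bsub>G\<^esub>)"
        using lift_eval[OF grpG _ u[unfolded H_def] v[unfolded H_def]] assms(4) w2
        by (simp add: H_def oneH[OF grpG] restrict_eq_iff)
      also have "\<dots> \<longleftrightarrow> (\<forall>p\<in>P. \<forall>i\<in>I. [u i, v (p i)] \<in> LB_solution_set G 2 S0)"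
        using uc vc pI by (auto simp: LB_solution_set_def kpoints_def)
      also have "\<dots> \<longleftrightarrow> (\<forall>p\<in>P. \<forall>i\<in>I. u i = \<one>\<^bsub>G\<^esub> \<or> v (p i) = \<one>\<^bsub>G\<^esub>)"
        using uc vc pI by (auto simp: S0(2)[symmetric] kpoints_def)
      also have "\<dots> \<longleftrightarrow> (\<forall>i\<in>I. u i = \<one>\<^bsub>G\<^esub>) \<or> (\<forall>j\<in>I. v j = \<one>\<^bsub>G\<^esub>)"
        using pI assms(5) by metis
      also have "\<dots> \<longleftrightarrow> u = \<one>\<^bsub>H\<^esub> \<or> v = \<one>\<^bsub>H\<^esub>"
      proof -
        have "u = \<one>\<^bsub>H\<^esub> \<longleftrightarrow> (\<forall>i\<in>I. u i = \<one>\<^bsub>G\<^esub>)" "v = \<one>\<^bsub>H\<^esub> \<longleftrightarrow> (\<forall>i\<in>I. v i = \<one>\<^bsub>G\<^esub>)"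
          using u v by (auto simp: H_def oneH[OF grpG] carrH[OF grpG] PiE_iff intro: extensionalityI[where A=I])
        then show ?thesis by simp
      qed
      finally show ?thesis using True xs by simp
    qed
  qed
  have "LB_equational_domain H Agen"
    by (rule A.ED_from_M) (unfold LB_algebraic_def, intro exI[of _ SH], use SHt MH in auto)
  then show ?thesis unfolding H_def Agen_def gens_def .
qed


end
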